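(* Let $T$ be a triangulation of the oriented 2-sphere (a simplicial complex), $z:\mathcal V(T)\to\mathbb C$ injective with no degenerate face. For every vertex $v$ and edge $e$, $$\frac{\partial\theta_e}{\partial z_v}=\frac{\mathrm i}2\sum_{e'\in\mathcal E(T)}A_{v,e'}E_{e',e},\qquad \frac{\partial\theta_e}{\partial\bar z_v}=-\frac{\mathrm i}2\sum_{e'\in\mathcal E(T)}\bar A_{v,e'}E_{e',e}.$$
   Context: Faces are written $(a,b,c)$ in positive cyclic order for the orientation. For an edge $e=\{a,b\}$ with adjacent faces $(a,b,c)$ and $(b,a,d)$, $\theta_e=\pi-\mathrm{Arg}\frac{z_b-z_c}{z_a-z_c}-\mathrm{Arg}\frac{z_a-z_d}{z_b-z_d}$ (local continuous branch; for a Delaunay triangulation with counterclockwise faces this is $\pi$ minus the sum of the two angles opposite $e$). $A_{v,e}=\frac1{z_v-z_{v'}}$ if $e=\{v,v'\}$, and $0$ if $v\notin e$; $\bar A$ is its complex conjugate. $E_{e,e'}$: for $e\neq e'$ in a common face with edges $\{a,b\},\{b,c\},\{c,a\}$ in positive cyclic order, $E_{e,e'}=-1$ if $e'$ immediately follows $e$ and $+1$ if $e'$ immediately precedes $e$; otherwise $0$. Derivatives are Wirtinger derivatives. *)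

theory Defs
  imports "HOL-Analysis.Analysis"
begin

text \<open>A triangulated surface is given by a finite vertex set V and a set F of
  positively oriented faces, written as triples (a,b,c).\<close>

definition edges :: "('v \<times> 'v \<times> 'v) set \<Rightarrow> 'v set set" where
  "edges F = {{a, b} | a b c. (a, b, c) \<in> F}"

definition sphere_triangulation :: "'v set \<Rightarrow> ('v \<times> 'v \<times> 'v) set \<Rightarrow> bool" where
  "sphere_triangulation V F \<longleftrightarrow>
     finite V \<and> F \<noteq> {} \<and>
     \<comment> \<open>faces are triples of distinct vertices\<close>
     (\<forall>a b c. (a, b, c) \<in> F \<longrightarrow> a \<in> V \<and> b \<in> V \<and> c \<in> V \<and> a \<noteq> b \<and> b \<noteq> c \<and> a \<noteq> c) \<and>
     \<comment> \<open>every vertex belongs to a face\<close>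
     (\<forall>v\<in>V. \<exists>b c. (v, b, c) \<in> F) \<and>
     \<comment> \<open>closed under cyclic rotation (same oriented face)\<close>
     (\<forall>a b c. (a, b, c) \<in> F \<longrightarrow> (b, c, a) \<in> F) \<and>
     \<comment> \<open>simplicial complex: a vertex set spans at most one face\<close>
     (\<forall>a b c a' b' c'. (a, b, c) \<in> F \<longrightarrow> (a', b', c') \<in> F \<longrightarrow> {a, b, c} = {a', b', c'} \<longrightarrow>
        (a', b', c') \<in> {(a, b, c), (b, c, a), (c, a, b)}) \<and>
     \<comment> \<open>each directed edge is in at most one positively oriented face\<close>
     (\<forall>a b c c'. (a, b, c) \<in> F \<longrightarrow> (a, b, c') \<in> F \<longrightarrow> c = c') \<and>
     \<comment> \<open>each edge is in a second face with the opposite induced orientation\<close>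
     (\<forall>a b c. (a, b, c) \<in> F \<longrightarrow> (\<exists>d. (b, a, d) \<in> F)) \<and>
     \<comment> \<open>vertex links are single cycles (manifold condition)\<close>
     (\<forall>v a b a' b'. (v, a, b) \<in> F \<longrightarrow> (v, a', b') \<in> F \<longrightarrow>
        (a, a') \<in> {(x, y). (v, x, y) \<in> F}\<^sup>*) \<and>
     \<comment> \<open>connected\<close>
     (\<forall>x\<in>V. \<forall>y\<in>V. (x, y) \<in> {(p, q). \<exists>r. (p, q, r) \<in> F}\<^sup>*) \<and>
     \<comment> \<open>Euler characteristic 2 (each face is listed 3 times in F)\<close>
     int (card V) - int (card (edges F)) + int (card F div 3) = 2"

definition nondegenerate_face :: "('v \<Rightarrow> complex) \<Rightarrow> 'v \<Rightarrow> 'v \<Rightarrow> 'v \<Rightarrow> bool" where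
  "nondegenerate_face z a b c \<longleftrightarrow> \<not> collinear {z a, z b, z c}"

text \<open>theta_e for the edge e = {a,b} with adjacent faces (a,b,c) and (b,a,d);
  the principal argument Arg is a continuous branch near any configuration where
  both faces are non-degenerate.\<close>
definition theta :: "('v \<Rightarrow> complex) \<Rightarrow> 'v \<Rightarrow> 'v \<Rightarrow> 'v \<Rightarrow> 'v \<Rightarrow> real" where
  "theta z a b c d = pi - Arg ((z b - z c) / (z a - z c)) - Arg ((z a - z d) / (z b - z d))"

definition Amat :: "('v \<Rightarrow> complex) \<Rightarrow> 'v \<Rightarrow> 'v set \<Rightarrow> complex" where
  "Amat z v e = (if v \<in> e then 1 / (z v - z (the_elem (e - {v}))) else 0)"

definition Emat :: "('v \<times> 'v \<times> 'v) set \<Rightarrow> 'v set \<Rightarrow> 'v set \<Rightarrow> complex" where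
  "Emat F e e' =
     (if e \<noteq> e' \<and> (\<exists>a b c. (a, b, c) \<in> F \<and> e = {a, b} \<and> e' = {b, c}) then -1
      else if e \<noteq> e' \<and> (\<exists>a b c. (a, b, c) \<in> F \<and> e' = {a, b} \<and> e = {b, c}) then 1
      else 0)"

text \<open>Wirtinger derivatives of a real-valued function with real derivative D
  (an R-linear map complex \<Rightarrow> real).\<close>
definition wirt_dz :: "(complex \<Rightarrow> real) \<Rightarrow> complex" where
  "wirt_dz D = (complex_of_real (D 1) - \<i> * complex_of_real (D \<i>)) / 2"

definition wirt_dzbar :: "(complex \<Rightarrow> real) \<Rightarrow> complex" where
  "wirt_dzbar D = (complex_of_real (D 1) + \<i> * complex_of_real (D \<i>)) / 2"

end

theory Submission imports Defs begin

lemma noncol_notreal: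
  fixes x y u :: complex
  assumes "\<not> collinear {x, y, u}"
  shows "(y - u) / (x - u) \<notin> \<real>" "x \<noteq> u" "y \<noteq> u" "x \<noteq> y"
proof -
  show xu: "x \<noteq> u" using assms by (metis collinear_2 insert_absorb2 insert_commute)
  show "y \<noteq> u" using assms by (metis collinear_2 insert_absorb2 insert_commute)
  show "x \<noteq> y" using assms by (metis collinear_2 insert_absorb2 insert_commute)
  show "(y - u) / (x - u) \<notin> \<real>"
  proof
    assume "(y - u) / (x - u) \<in> \<real>"
    then obtain r where r: "(y - u) / (x - u) = of_real r" by (metis Reals_cases)
    hence "y - u = r *\<^sub>R (x - u)" using xu by (simp add: field_simps scaleR_conv_of_real)
    hence "collinear {0, x - u, y - u}" by (auto simp: collinear_lemma)
    hence "collinear {x, u, y}" by (simp add: collinear_3)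
    thus False using assms by (simp add: insert_commute)
  qed
qed

lemma zz_deriv:
  "((\<lambda>w. (z(v:=w)) x) has_field_derivative (if x = v then 1 else 0)) (at y)"
  by (cases "x = v") (auto intro: derivative_eq_intros)

lemma quot_alg:
  fixes P Q dp dq :: complex
  assumes "P \<noteq> 0" "Q \<noteq> 0"
  shows "(dp * Q - P * dq) / (Q * Q) = (P / Q) * (dp / P - dq / Q)"
  using assms by (simp add: field_simps)

lemma quot_deriv:
  fixes z :: "'v \<Rightarrow> complex"
  assumes "z q \<noteq> z r" "z p \<noteq> z r"
  shows "((\<lambda>w. ((z(v:=w)) p - (z(v:=w)) r) / ((z(v:=w)) q - (z(v:=w)) r)) has_field_derivative
     ((z p - z r) / (z q - z r)) * (((if p = v then 1 else 0) - (if r = v then 1 else 0)) / (z p - z r)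
       - ((if q = v then 1 else 0) - (if r = v then 1 else 0)) / (z q - z r))) (at (z v))"
proof -
  have "((\<lambda>w. ((z(v:=w)) p - (z(v:=w)) r) / ((z(v:=w)) q - (z(v:=w)) r)) has_field_derivative
     ((((if p = v then 1 else 0) - (if r = v then 1 else 0)) * ((z(v:=z v)) q - (z(v:=z v)) r)
      - ((z(v:=z v)) p - (z(v:=z v)) r) * ((if q = v then 1 else 0) - (if r = v then 1 else 0)))
      / (((z(v:=z v)) q - (z(v:=z v)) r) * ((z(v:=z v)) q - (z(v:=z v)) r)))) (at (z v))"
    by (rule DERIV_divide DERIV_diff zz_deriv)+ (use assms in simp)
  moreover have "((((if p = v then 1 else 0) - (if r = v then 1 else 0)) * ((z(v:=z v)) q - (z(v:=z v)) r)
      - ((z(v:=z v)) p - (z(v:=z v)) r) * ((if q = v then 1 else 0) - (if r = v then 1 else 0)))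
      / (((z(v:=z v)) q - (z(v:=z v)) r) * ((z(v:=z v)) q - (z(v:=z v)) r))) =
     ((z p - z r) / (z q - z r)) * (((if p = v then 1 else 0) - (if r = v then 1 else 0)) / (z p - z r)
       - ((if q = v then 1 else 0) - (if r = v then 1 else 0)) / (z q - z r))"
    using assms by (simp add: quot_alg)
  ultimately show ?thesis by simp
qed

lemma Arg_comp_deriv:
  assumes W: "(W has_field_derivative W') (at x)" and nr: "W x \<notin> \<real>"
  shows "((\<lambda>w. Arg (W w)) has_derivative (\<lambda>h. Im (W' / W x * h))) (at x)"
proof -
  have nz: "W x \<noteq> 0" using nr by auto
  have np: "W x \<notin> \<real>\<^sub>\<le>\<^sub>0" using nr nonpos_Reals_subset_Reals by blast
  have "((\<lambda>w. Ln (W w)) has_field_derivative (inverse (W x) * W')) (at x)"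
    by (rule DERIV_chain2[OF has_field_derivative_Ln[OF np] W])
  hence "((\<lambda>w. Ln (W w)) has_derivative (\<lambda>h. (inverse (W x) * W') * h)) (at x)"
    by (simp add: has_field_derivative_def)
  hence "((\<lambda>w. Im (Ln (W w))) has_derivative (\<lambda>h. Im ((inverse (W x) * W') * h))) (at x)"
    by (rule has_derivative_Im)
  hence d: "((\<lambda>w. Im (Ln (W w))) has_derivative (\<lambda>h. Im (W' / W x * h))) (at x)"
    by (simp add: field_simps)
  have "continuous (at x) W" using W by (rule DERIV_continuous)
  then obtain e where e: "e > 0" "\<And>y. dist x y < e \<Longrightarrow> W y \<noteq> 0"
    using continuous_at_avoid[of x W 0] nz by blast
  show ?thesis
    apply (rule has_derivative_transform_within[OF d e(1)])
    using e(2) by (auto simp: Arg_def dist_commute field_simps)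
qed


lemma Amat_pair:
  assumes "x \<noteq> y"
  shows "Amat z v {x, y} = ((if x = v then 1 else 0) - (if y = v then 1 else 0)) / (z x - z y)"
proof (cases "v = x")
  case True thus ?thesis using assms by (simp add: Amat_def insert_Diff_if)
next
  case False
  show ?thesis
  proof (cases "v = y")
    case True
    hence "{x, y} - {v} = {x}" using assms by auto
    moreover have "1 / (z y - z x) = - (1 / (z x - z y))"
      by (metis minus_diff_eq divide_minus_right)
    ultimately show ?thesis using True False assms by (simp add: Amat_def)
  next
    case False
    thus ?thesis using \<open>v \<noteq> x\<close> by (simp add: Amat_def)
  qed
qed

lemma edges_finite:
  assumes "finite V" "\<And>a b c. (a, b, c) \<in> F \<Longrightarrow> a \<in> V \<and> b \<in> V \<and> c \<in> V"
  shows "finite (edges F)"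
proof -
  have "F \<subseteq> V \<times> V \<times> V" using assms(2) by auto
  hence fF: "finite F" using assms(1) by (meson finite_SigmaI finite_subset)
  have "edges F = (\<lambda>(a, b, c). {a, b}) ` F" unfolding edges_def by force
  thus ?thesis using fF by simp
qed

theorem proposition3:
  fixes V :: "'v set" and F :: "('v \<times> 'v \<times> 'v) set" and z :: "'v \<Rightarrow> complex"
  assumes T: "sphere_triangulation V F"
    and inj: "inj_on z V"
    and nondeg: "\<forall>a b c. (a, b, c) \<in> F \<longrightarrow> nondegenerate_face z a b c"
    and v: "v \<in> V"
    and f1: "(a, b, c) \<in> F" and f2: "(b, a, d) \<in> F"
  shows "\<exists>D. ((\<lambda>w. theta (z(v := w)) a b c d) has_derivative D) (at (z v)) \<and>
             wirt_dz D = \<i> / 2 * (\<Sum>e'\<in>edges F. Amat z v e' * Emat F e' {a, b}) \<and>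
             wirt_dzbar D = - \<i> / 2 * (\<Sum>e'\<in>edges F. cnj (Amat z v e') * Emat F e' {a, b})"
proof -
  note TT = T[unfolded sphere_triangulation_def]
  have finV: "finite V" using TT by blast
  have fv0: "\<forall>a b c. (a, b, c) \<in> F \<longrightarrow> a \<in> V \<and> b \<in> V \<and> c \<in> V \<and> a \<noteq> b \<and> b \<noteq> c \<and> a \<noteq> c"
    using TT by (elim conjE) assumption
  have rot0: "\<forall>a b c. (a, b, c) \<in> F \<longrightarrow> (b, c, a) \<in> F" using TT by (elim conjE) assumption
  have sc0: "\<forall>a b c a' b' c'. (a, b, c) \<in> F \<longrightarrow> (a', b', c') \<in> F \<longrightarrow> {a, b, c} = {a', b', c'} \<longrightarrow>
        (a', b', c') \<in> {(a, b, c), (b, c, a), (c, a, b)}" using TT by (elim conjE) assumption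
  have un0: "\<forall>a b c c'. (a, b, c) \<in> F \<longrightarrow> (a, b, c') \<in> F \<longrightarrow> c = c'" using TT by (elim conjE) assumption
  have fv: "\<And>a b c. (a, b, c) \<in> F \<Longrightarrow> a \<in> V \<and> b \<in> V \<and> c \<in> V \<and> a \<noteq> b \<and> b \<noteq> c \<and> a \<noteq> c"
    using fv0 by blast
  have rot: "\<And>a b c. (a, b, c) \<in> F \<Longrightarrow> (b, c, a) \<in> F" using rot0 by blast
  have sc: "\<And>a b c a' b' c'. (a, b, c) \<in> F \<Longrightarrow> (a', b', c') \<in> F \<Longrightarrow> {a, b, c} = {a', b', c'} \<Longrightarrow>
        (a', b', c') \<in> {(a, b, c), (b, c, a), (c, a, b)}" using sc0 by blast
  have un: "\<And>a b c c'. (a, b, c) \<in> F \<Longrightarrow> (a, b, c') \<in> F \<Longrightarrow> c = c'" using un0 by blast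
  have ab: "a \<noteq> b" "b \<noteq> c" "a \<noteq> c" using fv[OF f1] by auto
  have ad: "a \<noteq> d" "b \<noteq> d" using fv[OF f2] by auto
  have cd: "c \<noteq> d"
  proof
    assume "c = d"
    hence "(b, a, c) \<in> {(a, b, c), (b, c, a), (c, a, b)}"
      using sc[OF f1 f2] by (auto simp: insert_commute)
    thus False using ab by auto
  qed
  have r1: "(b, c, a) \<in> F" "(c, a, b) \<in> F" using rot f1 by blast+
  have r2: "(a, d, b) \<in> F" "(d, b, a) \<in> F" using rot f2 by blast+
  define f :: "'v set \<Rightarrow> complex" where
    "f e' = (if e' = {a, c} \<or> e' = {b, d} then -1 else if e' = {b, c} \<or> e' = {a, d} then 1 else 0)" for e'
  have c1: "(\<exists>x y w. (x, y, w) \<in> F \<and> e' = {x, y} \<and> {a, b} = {y, w}) \<longleftrightarrow> e' = {a, c} \<or> e' = {b, d}" for e'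
  proof
    assume "\<exists>x y w. (x, y, w) \<in> F \<and> e' = {x, y} \<and> {a, b} = {y, w}"
    then obtain x y w where h: "(x, y, w) \<in> F" "e' = {x, y}" "{a, b} = {y, w}" by blast
    from h(3) have "(y = a \<and> w = b) \<or> (y = b \<and> w = a)" by (auto simp: doubleton_eq_iff)
    thus "e' = {a, c} \<or> e' = {b, d}"
    proof
      assume "y = a \<and> w = b"
      hence "(a, b, x) \<in> F" using rot h(1) by blast
      hence "x = c" using un f1 by blast
      thus ?thesis using h(2) \<open>y = a \<and> w = b\<close> by (auto simp: insert_commute)
    next
      assume "y = b \<and> w = a"
      hence "(b, a, x) \<in> F" using rot h(1) by blast
      hence "x = d" using un f2 by blast
      thus ?thesis using h(2) \<open>y = b \<and> w = a\<close> by (auto simp: insert_commute)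
    qed
  next
    assume "e' = {a, c} \<or> e' = {b, d}"
    thus "\<exists>x y w. (x, y, w) \<in> F \<and> e' = {x, y} \<and> {a, b} = {y, w}"
    proof
      assume "e' = {a, c}"
      thus ?thesis using r1(2) by (intro exI[of _ c] exI[of _ a] exI[of _ b]) (auto simp: insert_commute)
    next
      assume "e' = {b, d}"
      thus ?thesis using r2(2) by (intro exI[of _ d] exI[of _ b] exI[of _ a]) (auto simp: insert_commute)
    qed
  qed
  have c2: "(\<exists>x y w. (x, y, w) \<in> F \<and> {a, b} = {x, y} \<and> e' = {y, w}) \<longleftrightarrow> e' = {b, c} \<or> e' = {a, d}" for e'
  proof
    assume "\<exists>x y w. (x, y, w) \<in> F \<and> {a, b} = {x, y} \<and> e' = {y, w}"
    then obtain x y w where h: "(x, y, w) \<in> F" "{a, b} = {x, y}" "e' = {y, w}" by blast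
    from h(2) have "(x = a \<and> y = b) \<or> (x = b \<and> y = a)" by (auto simp: doubleton_eq_iff)
    thus "e' = {b, c} \<or> e' = {a, d}"
    proof
      assume "x = a \<and> y = b"
      hence "w = c" using un f1 h(1) by blast
      thus ?thesis using h(3) \<open>x = a \<and> y = b\<close> by auto
    next
      assume "x = b \<and> y = a"
      hence "w = d" using un f2 h(1) by blast
      thus ?thesis using h(3) \<open>x = b \<and> y = a\<close> by auto
    qed
  next
    assume "e' = {b, c} \<or> e' = {a, d}"
    thus "\<exists>x y w. (x, y, w) \<in> F \<and> {a, b} = {x, y} \<and> e' = {y, w}"
    proof
      assume "e' = {b, c}"
      thus ?thesis using f1 by blast
    next
      assume "e' = {a, d}"
      thus ?thesis using f2 by (intro exI[of _ b] exI[of _ a] exI[of _ d]) (auto simp: insert_commute)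
    qed
  qed
  have Ef: "Emat F e' {a, b} = f e'" for e'
  proof -
    have n1: "{a, c} \<noteq> {a, b}" "{b, d} \<noteq> {a, b}" "{b, c} \<noteq> {a, b}" "{a, d} \<noteq> {a, b}"
      using ab ad by (auto simp: doubleton_eq_iff)
    show ?thesis
      unfolding Emat_def f_def using c1[of e'] c2[of e'] n1 by auto
  qed
  have finE: "finite (edges F)" using edges_finite[OF finV] fv by blast
  define K where "K = {{a, c}, {b, d}, {b, c}, {a, d}}"
  have KE: "K \<subseteq> edges F"
    unfolding K_def edges_def using f1 f2 r1 r2 by (auto simp: insert_commute)
  have sumg: "(\<Sum>e'\<in>edges F. g e' * Emat F e' {a, b}) = - g {a, c} - g {b, d} + g {b, c} + g {a, d}"
    for g :: "'v set \<Rightarrow> complex"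
  proof -
    have "(\<Sum>e'\<in>edges F. g e' * Emat F e' {a, b}) = (\<Sum>e'\<in>edges F. g e' * f e')" by (simp add: Ef)
    also have "\<dots> = (\<Sum>e'\<in>K. g e' * f e')"
      by (rule sum.mono_neutral_right[OF finE KE]) (auto simp: K_def f_def)
    also have "\<dots> = - g {a, c} - g {b, d} + g {b, c} + g {a, d}"
      unfolding K_def f_def using ab ad cd by (simp add: doubleton_eq_iff)
    finally show ?thesis .
  qed
  define dl where "dl x = (if x = v then 1 else 0 :: complex)" for x
  have nd1: "\<not> collinear {z a, z b, z c}" using nondeg f1 by (simp add: nondegenerate_face_def)
  have nd2: "\<not> collinear {z b, z a, z d}" using nondeg f2 by (simp add: nondegenerate_face_def)
  note n1 = noncol_notreal[OF nd1] and n2 = noncol_notreal[OF nd2]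
  define W1 where "W1 = (z b - z c) / (z a - z c)"
  define W2 where "W2 = (z a - z d) / (z b - z d)"
  define X1 where "X1 = (dl b - dl c) / (z b - z c) - (dl a - dl c) / (z a - z c)"
  define X2 where "X2 = (dl a - dl d) / (z a - z d) - (dl b - dl d) / (z b - z d)"
  have W1nz: "W1 \<noteq> 0" and W2nz: "W2 \<noteq> 0" using n1 n2 unfolding W1_def W2_def by auto
  have q1: "((\<lambda>w. ((z(v:=w)) b - (z(v:=w)) c) / ((z(v:=w)) a - (z(v:=w)) c)) has_field_derivative W1 * X1) (at (z v))"
    using quot_deriv[of z a c b v] n1 unfolding W1_def X1_def dl_def by auto
  have q2: "((\<lambda>w. ((z(v:=w)) a - (z(v:=w)) d) / ((z(v:=w)) b - (z(v:=w)) d)) has_field_derivative W2 * X2) (at (z v))"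
    using quot_deriv[of z b d a v] n2 unfolding W2_def X2_def dl_def by auto
  have a1: "((\<lambda>w. Arg (((z(v:=w)) b - (z(v:=w)) c) / ((z(v:=w)) a - (z(v:=w)) c))) has_derivative (\<lambda>h. Im (X1 * h))) (at (z v))"
    using Arg_comp_deriv[OF q1] n1 W1nz unfolding W1_def by simp
  have a2: "((\<lambda>w. Arg (((z(v:=w)) a - (z(v:=w)) d) / ((z(v:=w)) b - (z(v:=w)) d))) has_derivative (\<lambda>h. Im (X2 * h))) (at (z v))"
    using Arg_comp_deriv[OF q2] n2 W2nz unfolding W2_def by simp
  define D where "D h = 0 - Im (X1 * h) - Im (X2 * h)" for h
  have hd: "((\<lambda>w. theta (z(v := w)) a b c d) has_derivative D) (at (z v))"
    unfolding theta_def D_def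
    by (intro has_derivative_diff has_derivative_const a1 a2)
  have S: "- Amat z v {a, c} - Amat z v {b, d} + Amat z v {b, c} + Amat z v {a, d} = X1 + X2"
    using ab ad by (simp add: Amat_pair X1_def X2_def dl_def algebra_simps)
  have Sc: "- cnj (Amat z v {a, c}) - cnj (Amat z v {b, d}) + cnj (Amat z v {b, c}) + cnj (Amat z v {a, d}) = cnj (X1 + X2)"
    using S by (metis complex_cnj_add complex_cnj_diff complex_cnj_minus)
  show ?thesis
  proof (intro exI[of _ D] conjI hd)
    show "wirt_dz D = \<i> / 2 * (\<Sum>e'\<in>edges F. Amat z v e' * Emat F e' {a, b})"
      unfolding sumg S by (simp add: wirt_dz_def D_def complex_eq_iff)
    show "wirt_dzbar D = - \<i> / 2 * (\<Sum>e'\<in>edges F. cnj (Amat z v e') * Emat F e' {a, b})"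
      using sumg[of "\<lambda>e. cnj (Amat z v e)"] Sc by (simp add: wirt_dzbar_def D_def complex_eq_iff field_simps)
  qed
qed

end
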